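(* Let $D:\mathbb R^2\setminus\{0\}\to\mathbb R$ be nonnegative, bounded and continuously differentiable, and consider $\ddot x+D(x)\dot x=-x/|x|^3$. Let $x_n:\,]-\infty,0]\to\mathbb R^2\setminus\{0\}$ be a sequence of nonrectilinear solutions, and set $r_n=|x_n|$. Suppose that for some $r_*>0$ we have $r_n(0)=r_*$ for all $n$ and $\dot r_n(0)\to+\infty$. Then for all $n$ large enough: (i) there exists $\mathfrak t_n<0$ with $\dot r_n(\mathfrak t_n)=0$, and moreover these can be chosen with $\lim_{n\to\infty}\mathfrak t_n=0$; (ii) $\dot r_n(t)>0$ for all $t\in\,]\mathfrak t_n,0[$ and $\dot r_n(t)<0$ for all $t<\mathfrak t_n$; (iii) there exists $\tau_n<\mathfrak t_n$ with $r_n(\tau_n)=r_*$; moreover $\lim_{n\to\infty}\tau_n=0$ and $\lim_{n\to\infty}\dot r_n(\tau_n)=-\infty$.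
   Context: A solution is nonrectilinear if its angular momentum $\det(x,\dot x)$ is not identically zero; such solutions are defined on all of $]-\infty,0]$ when maximal in the past. *)

theory Defs
  imports "HOL-Analysis.Analysis"
begin

definition det2 :: "real^2 \<Rightarrow> real^2 \<Rightarrow> real" where
  "det2 a b = a$1 * b$2 - a$2 * b$1"

definition C1_punctured :: "(real^2 \<Rightarrow> real) \<Rightarrow> bool" where
  "C1_punctured D \<longleftrightarrow> (\<exists>G :: real^2 \<Rightarrow> real^2.
      (\<forall>y. y \<noteq> 0 \<longrightarrow> (D has_derivative (\<lambda>h. G y \<bullet> h)) (at y)) \<and>
      continuous_on (UNIV - {0}) G)"

definition past_solution ::
  "(real^2 \<Rightarrow> real) \<Rightarrow> (real \<Rightarrow> real^2) \<Rightarrow> (real \<Rightarrow> real^2) \<Rightarrow> bool" where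
  "past_solution D x v \<longleftrightarrow>
     (\<forall>t\<le>0. x t \<noteq> 0 \<and>
        (x has_vector_derivative v t) (at t within {..0}) \<and>
        (v has_vector_derivative
           (- (D (x t) *\<^sub>R v t) - (1 / norm (x t) ^ 3) *\<^sub>R x t)) (at t within {..0}))"

text \<open>Nonrectilinear: angular momentum det(x, x') not identically zero.\<close>
definition nonrectilinear :: "(real \<Rightarrow> real^2) \<Rightarrow> (real \<Rightarrow> real^2) \<Rightarrow> bool" where
  "nonrectilinear x v \<longleftrightarrow> (\<exists>t\<le>0. det2 (x t) (v t) \<noteq> 0)"

end

theory Submission
  imports Defs
begin


lemma inner_vd:
  fixes f g :: "real \<Rightarrow> 'a::real_inner"
  assumes "(f has_vector_derivative f') (at t within S)" "(g has_vector_derivative g') (at t within S)"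
  shows "((\<lambda>s. f s \<bullet> g s) has_real_derivative (f t \<bullet> g' + f' \<bullet> g t)) (at t within S)"
proof -
  have "((\<lambda>s. f s \<bullet> g s) has_derivative (\<lambda>h. f t \<bullet> (h *\<^sub>R g') + (h *\<^sub>R f') \<bullet> g t)) (at t within S)"
    using has_derivative_inner[OF assms(1)[unfolded has_vector_derivative_def] assms(2)[unfolded has_vector_derivative_def]] .
  moreover have "(\<lambda>h. f t \<bullet> (h *\<^sub>R g') + (h *\<^sub>R f') \<bullet> g t) = (*) (f t \<bullet> g' + f' \<bullet> g t)"
    by (auto simp: algebra_simps)
  ultimately show ?thesis unfolding has_field_derivative_def by simp
qed

lemma mvt_within:
  fixes f f' :: "real \<Rightarrow> real"
  assumes "p < q" "q \<le> 0"
    and d: "\<And>t. t \<in> {p..q} \<Longrightarrow> (f has_real_derivative f' t) (at t within {..0})"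
  shows "\<exists>z. p < z \<and> z < q \<and> f q - f p = (q - p) * f' z"
proof -
  have "continuous_on {p..q} f"
  proof (rule continuous_on_eq_continuous_within[THEN iffD2], intro ballI)
    fix t assume t: "t \<in> {p..q}"
    have "continuous (at t within {..0}) f" using d[OF t] by (rule DERIV_continuous)
    then show "continuous (at t within {p..q}) f"
      by (rule continuous_within_subset) (use assms in auto)
  qed
  moreover have "\<And>z. p < z \<Longrightarrow> z < q \<Longrightarrow> (f has_derivative (*) (f' z)) (at z)"
  proof -
    fix z assume z: "p < z" "z < q"
    have "at z within {..0} = at z"
      by (rule at_within_interior) (use z assms in auto)
    then show "(f has_derivative (*) (f' z)) (at z)"
      using d[of z] z unfolding has_field_derivative_def by auto
  qed
  ultimately obtain z where "p < z" "z < q" "f q - f p = (q - p) * f' z"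
    using mvt[OF assms(1), of f "\<lambda>z. (*) (f' z)"] by (auto simp: mult.commute)
  then show ?thesis by blast
qed

lemma mono_within:
  fixes f f' :: "real \<Rightarrow> real"
  assumes "p \<le> q" "q \<le> 0"
    and d: "\<And>t. t \<in> {p..q} \<Longrightarrow> (f has_real_derivative f' t) (at t within {..0})"
    and nn: "\<And>t. p < t \<Longrightarrow> t < q \<Longrightarrow> f' t \<ge> 0"
  shows "f p \<le> f q"
proof (cases "p = q")
  case False
  then have "p < q" using assms by auto
  from mvt_within[OF this assms(2) d] obtain z where "p < z" "z < q" "f q - f p = (q - p) * f' z" by blast
  with nn[of z] \<open>p<q\<close> show ?thesis by (smt (verit) mult_nonneg_nonneg)
qed auto

lemma smono_within:
  fixes f f' :: "real \<Rightarrow> real"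
  assumes "p < q" "q \<le> 0"
    and d: "\<And>t. t \<in> {p..q} \<Longrightarrow> (f has_real_derivative f' t) (at t within {..0})"
    and nn: "\<And>t. p < t \<Longrightarrow> t < q \<Longrightarrow> f' t > 0"
  shows "f p < f q"
proof -
  from mvt_within[OF assms(1,2) d] obtain z where "p < z" "z < q" "f q - f p = (q - p) * f' z" by blast
  with nn[of z] \<open>p<q\<close> show ?thesis by (smt (verit) mult_pos_pos)
qed

lemma cont_within:
  fixes f f' :: "real \<Rightarrow> real"
  assumes "q \<le> 0" and d: "\<And>t. t \<in> {p..q} \<Longrightarrow> (f has_real_derivative f' t) (at t within {..0})"
  shows "continuous_on {p..q} f"
proof (rule continuous_on_eq_continuous_within[THEN iffD2], intro ballI)
  fix t assume t: "t \<in> {p..q}"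
  have "continuous (at t within {..0}) f" using d[OF t] by (rule DERIV_continuous)
  then show "continuous (at t within {p..q}) f"
    by (rule continuous_within_subset) (use assms in auto)
qed

lemma deriv_at_neg:
  assumes "(f has_real_derivative l) (at t within {..0})" "t < 0"
  shows "(f has_real_derivative l) (at t)"
proof -
  have "at t within {..0} = at t" by (rule at_within_interior) (use assms in auto)
  with assms show ?thesis by simp
qed

lemma sign_aux:
  fixes h h' :: "real \<Rightarrow> real"
  assumes d: "\<And>t. t \<le> 0 \<Longrightarrow> (h has_real_derivative h' t) (at t within {..0})"
    and z: "\<And>t. t < 0 \<Longrightarrow> h t = 0 \<Longrightarrow> h' t > 0"
    and st: "s < t" "t < 0" and hs: "h s \<ge> 0" and ht: "h t < 0"
  shows False
proof -
  have c: "continuous_on {s..t} h" by (rule cont_within[of t _ _ h']) (use d st in auto)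
  define S where "S = {s..t} \<inter> h -` {0..}"
  have "closed S" unfolding S_def by (rule continuous_closed_preimage[OF c]) auto
  moreover have "s \<in> S" using st hs by (auto simp: S_def)
  moreover have "bdd_above S" by (auto simp: S_def bdd_above_def)
  ultimately have zS: "Sup S \<in> S" using closed_contains_Sup by blast
  define w where "w = Sup S"
  have ub: "\<And>u. u \<in> S \<Longrightarrow> u \<le> w" unfolding w_def using \<open>bdd_above S\<close> by (simp add: cSup_upper)
  have w: "s \<le> w" "w \<le> t" "h w \<ge> 0" using zS by (auto simp: S_def w_def)
  have wt: "w < t" using w ht by (cases "w = t") auto
  have c2: "continuous_on {w..t} h" using c by (rule continuous_on_subset) (use w in auto)
  obtain y where y: "w \<le> y" "y \<le> t" "h y = 0" using IVT2'[of h t 0 w, OF _ w(3) _ c2] ht wt by auto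
  have "y \<in> S" using y w by (auto simp: S_def)
  then have "y = w" using ub y by force
  then have hw0: "h w = 0" using y by simp
  have "(h has_real_derivative h' w) (at w)" using d[of w] deriv_at_neg w wt st by auto
  moreover have "h' w > 0" using z[of w] hw0 wt st by simp
  ultimately obtain e where e: "e > 0" "\<And>k. k > 0 \<Longrightarrow> k < e \<Longrightarrow> h w < h (w + k)"
    using DERIV_pos_inc_right by blast
  obtain k where kk: "0 < k" "k < e" "k < t - w" using field_lbound_gt_zero[OF e(1), of "t - w"] wt by auto
  have k: "k > 0" "k < e" "w + k \<le> t" using kk by simp_all
  have "h (w + k) > 0" using e(2)[OF k(1,2)] hw0 by simp
  moreover have "s \<le> w + k" using w(1) k(1) by simp
  ultimately have "w + k \<in> S" using k(3) by (simp add: S_def)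
  then have "w + k \<le> w" by (rule ub)
  then show False using k(1) by simp
qed

lemma sign_lemma:
  fixes h h' :: "real \<Rightarrow> real"
  assumes d: "\<And>t. t \<le> 0 \<Longrightarrow> (h has_real_derivative h' t) (at t within {..0})"
    and z: "\<And>t. t < 0 \<Longrightarrow> h t = 0 \<Longrightarrow> h' t > 0"
    and st: "s < t" "t < 0" and hs: "h s \<ge> 0"
  shows "h t > 0"
proof (rule ccontr)
  assume "\<not> h t > 0"
  then consider "h t < 0" | "h t = 0" by linarith
  then show False
  proof cases
    case 1 then show False using sign_aux[OF d z st hs] by blast
  next
    case 2
    have "(h has_real_derivative h' t) (at t)" using d[of t] deriv_at_neg st by auto
    moreover have "h' t > 0" using z[of t] 2 st by simp
    ultimately obtain e where e: "e > 0" "\<And>k. k > 0 \<Longrightarrow> k < e \<Longrightarrow> h (t - k) < h t"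
      using DERIV_pos_inc_left by blast
    obtain k where kk: "0 < k" "k < e" "k < t - s" using field_lbound_gt_zero[OF e(1), of "t - s"] st by auto
    have k: "k > 0" "k < e" "s < t - k" using kk by simp_all
    have "h (t - k) < 0" using e(2)[OF k(1,2)] 2 by simp
    moreover have "t - k < 0" using st(2) k(1) by simp
    ultimately show False using sign_aux[OF d z k(3) _ hs] by blast
  qed
qed

lemma antimono_within:
  fixes f f' :: "real \<Rightarrow> real"
  assumes "p \<le> q" "q \<le> 0"
    and d: "\<And>t. t \<in> {p..q} \<Longrightarrow> (f has_real_derivative f' t) (at t within {..0})"
    and nn: "\<And>t. p < t \<Longrightarrow> t < q \<Longrightarrow> f' t \<le> 0"
  shows "f q \<le> f p"
proof -
  have "(\<lambda>s. - f s) p \<le> (\<lambda>s. - f s) q"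
    by (rule mono_within[OF assms(1,2), of _ "\<lambda>s. - f' s"]) (use d nn in \<open>auto intro: DERIV_minus\<close>)
  then show ?thesis by simp
qed

lemma deriv_unique_le0:
  assumes "t \<le> 0" "(f has_real_derivative a) (at t within {..0})" "(f has_real_derivative b) (at t within {..0})"
  shows "a = b"
proof -
  have s: "{t-1..t} \<subseteq> {..0}" using assms by auto
  have "(f has_vector_derivative a) (at t within cbox (t-1) t)"
    using DERIV_subset[OF assms(2) s] by (simp add: has_real_derivative_iff_has_vector_derivative cbox_interval)
  moreover have "(f has_vector_derivative b) (at t within cbox (t-1) t)"
    using DERIV_subset[OF assms(3) s] by (simp add: has_real_derivative_iff_has_vector_derivative cbox_interval)
  ultimately show ?thesis
    using vector_derivative_unique_within_closed_interval[of "t-1" t t f a b] by (auto simp: cbox_interval)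
qed

lemma per_solution:
  fixes D :: "real^2 \<Rightarrow> real" and x v :: "real \<Rightarrow> real^2" and rd :: "real \<Rightarrow> real"
  assumes Dnn: "\<And>y. y \<noteq> 0 \<Longrightarrow> D y \<ge> 0" and DB: "\<And>y. y \<noteq> 0 \<Longrightarrow> D y \<le> B" and B: "B \<ge> 0"
    and sol: "past_solution D x v"
    and rdd: "\<And>t. t \<le> 0 \<Longrightarrow> ((\<lambda>s. norm (x s)) has_real_derivative rd t) (at t within {..0})"
    and rs: "rs > 0" and r0: "norm (x 0) = rs"
    and V1: "rd 0 \<ge> 8*rs" and V2: "rd 0 \<ge> 4*B*rs*exp B" and V3: "(rd 0)^2 \<ge> 4/rs"
  shows "\<exists>T tau. T < 0 \<and> rd T = 0 \<and> (\<forall>t. T < t \<and> t < 0 \<longrightarrow> rd t > 0) \<and> (\<forall>t. t < T \<longrightarrow> rd t < 0)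
     \<and> tau < T \<and> norm (x tau) = rs \<and> - 8*rs / rd 0 \<le> T \<and> - (8*rs + 6*rs*exp B) / rd 0 \<le> tau
     \<and> rd tau \<le> - rd 0"
proof -
  define V where "V = rd 0"
  have Vpos: "V > 0" using V1 rs by (simp add: V_def)
  define a where "a t = -(D (x t) *\<^sub>R v t) - (1 / norm (x t) ^ 3) *\<^sub>R x t" for t
  have xnz: "\<And>t. t \<le> 0 \<Longrightarrow> x t \<noteq> 0"
    and xd: "\<And>t. t \<le> 0 \<Longrightarrow> (x has_vector_derivative v t) (at t within {..0})"
    and vd: "\<And>t. t \<le> 0 \<Longrightarrow> (v has_vector_derivative a t) (at t within {..0})"
    using sol unfolding past_solution_def a_def by auto
  define r where "r t = norm (x t)" for t
  define g where "g t = x t \<bullet> x t" for t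
  define h where "h t = x t \<bullet> v t" for t
  define q where "q t = v t \<bullet> v t" for t
  define Dx where "Dx t = D (x t)" for t
  have rpos: "\<And>t. t \<le> 0 \<Longrightarrow> r t > 0" using xnz by (simp add: r_def)
  have gr: "\<And>t. g t = (r t)^2" by (simp add: g_def r_def power2_norm_eq_inner)
  have D0: "\<And>t. t \<le> 0 \<Longrightarrow> Dx t \<ge> 0" and D1: "\<And>t. t \<le> 0 \<Longrightarrow> Dx t \<le> B"
    using Dnn DB xnz by (auto simp: Dx_def)
  have xa: "\<And>t. t \<le> 0 \<Longrightarrow> x t \<bullet> a t = - Dx t * h t - 1 / r t"
  proof -
    fix t :: real assume t: "t \<le> 0"
    have "x t \<bullet> a t = - Dx t * h t - (1 / r t ^ 3) * g t"
      by (simp add: a_def Dx_def h_def g_def r_def inner_diff_right)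
    also have "(1 / r t ^ 3) * g t = 1 / r t" using rpos[OF t] by (simp add: gr power2_eq_square power3_eq_cube)
    finally show "x t \<bullet> a t = - Dx t * h t - 1 / r t" .
  qed
  have va: "\<And>t. t \<le> 0 \<Longrightarrow> v t \<bullet> a t = - Dx t * q t - h t / r t ^ 3"
    by (simp add: a_def Dx_def h_def q_def r_def inner_diff_right inner_commute)
  have gd: "\<And>t. t \<le> 0 \<Longrightarrow> (g has_real_derivative 2 * h t) (at t within {..0})"
  proof -
    fix t :: real assume t: "t \<le> 0"
    show "(g has_real_derivative 2 * h t) (at t within {..0})"
      using inner_vd[OF xd[OF t] xd[OF t]] unfolding g_def h_def by (simp add: inner_commute)
  qed
  have hd: "\<And>t. t \<le> 0 \<Longrightarrow> (h has_real_derivative q t - Dx t * h t - 1 / r t) (at t within {..0})"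
  proof -
    fix t :: real assume t: "t \<le> 0"
    have "(h has_real_derivative (x t \<bullet> a t + v t \<bullet> v t)) (at t within {..0})"
      using inner_vd[OF xd[OF t] vd[OF t]] unfolding h_def by simp
    moreover have "x t \<bullet> a t + v t \<bullet> v t = q t - Dx t * h t - 1 / r t" using xa[OF t] by (simp add: q_def)
    ultimately show "(h has_real_derivative q t - Dx t * h t - 1 / r t) (at t within {..0})" by simp
  qed
  have qd: "\<And>t. t \<le> 0 \<Longrightarrow> (q has_real_derivative 2 * (- Dx t * q t - h t / r t ^ 3)) (at t within {..0})"
  proof -
    fix t :: real assume t: "t \<le> 0"
    show "(q has_real_derivative 2 * (- Dx t * q t - h t / r t ^ 3)) (at t within {..0})"
      using inner_vd[OF vd[OF t] vd[OF t]] va[OF t] unfolding q_def by (simp add: inner_commute)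
  qed
  have rdh: "\<And>t. t \<le> 0 \<Longrightarrow> rd t = h t / r t"
  proof -
    fix t :: real assume t: "t \<le> 0"
    have "((\<lambda>s. r s * r s) has_real_derivative rd t * r t + rd t * r t) (at t within {..0})"
      using DERIV_mult[OF rdd[OF t] rdd[OF t]] unfolding r_def by simp
    moreover have "(\<lambda>s. r s * r s) = g" using gr by (auto simp: power2_eq_square)
    ultimately have "((g has_real_derivative rd t * r t + rd t * r t) (at t within {..0}))" by simp
    from deriv_unique_le0[OF t this gd[OF t]] have "rd t * r t = h t" by (simp add: mult.commute)
    then show "rd t = h t / r t" using rpos[OF t] by (simp add: field_simps)
  qed
  have rdr: "\<And>t. t \<le> 0 \<Longrightarrow> (r has_real_derivative h t / r t) (at t within {..0})"
    using rdd rdh unfolding r_def by auto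
  have rid: "\<And>t. t \<le> 0 \<Longrightarrow> ((\<lambda>s. inverse (r s)) has_real_derivative - (h t / r t ^ 3)) (at t within {..0})"
  proof -
    fix t :: real assume t: "t \<le> 0"
    have "((\<lambda>s. inverse (r s)) has_real_derivative - (h t / r t * inverse (r t ^ Suc (Suc 0)))) (at t within {..0})"
      using DERIV_inverse_fun[OF rdr[OF t]] rpos[OF t] by simp
    moreover have "h t / r t * inverse (r t ^ Suc (Suc 0)) = h t / r t ^ 3"
      using rpos[OF t] by (simp add: field_simps power3_eq_cube power2_eq_square)
    ultimately show "((\<lambda>s. inverse (r s)) has_real_derivative - (h t / r t ^ 3)) (at t within {..0})" by simp
  qed
  define E where "E t = q t / 2 - inverse (r t)" for t
  have Ed: "\<And>t. t \<le> 0 \<Longrightarrow> (E has_real_derivative - Dx t * q t) (at t within {..0})"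
  proof -
    fix t :: real assume t: "t \<le> 0"
    have "((\<lambda>s. q s / 2 - inverse (r s)) has_real_derivative 2 * (- Dx t * q t - h t / r t ^ 3) / 2 - - (h t / r t ^ 3)) (at t within {..0})"
      by (rule DERIV_diff[OF DERIV_cdivide[OF qd[OF t]] rid[OF t]])
    moreover have "2 * (- Dx t * q t - h t / r t ^ 3) / 2 - - (h t / r t ^ 3) = - Dx t * q t" by (simp add: field_simps)
    ultimately show "(E has_real_derivative - Dx t * q t) (at t within {..0})" unfolding E_def by simp
  qed
  have qnn: "\<And>t. q t \<ge> 0" by (simp add: q_def)
  have Emono: "\<And>t. t \<le> 0 \<Longrightarrow> E 0 \<le> E t"
  proof -
    fix t :: real assume t: "t \<le> 0"
    show "E 0 \<le> E t"
      by (rule antimono_within[OF t order_refl, of E "\<lambda>s. - Dx s * q s"]) (use Ed D0 qnn in \<open>auto intro!: mult_nonneg_nonneg\<close>)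
  qed
  have r0': "r 0 = rs" using r0 by (simp add: r_def)
  have h0: "h 0 = rs * V" using rdh[of 0] r0' rs by (simp add: V_def field_simps)
  have "(h 0)^2 \<le> g 0 * q 0" unfolding h_def g_def q_def by (rule Cauchy_Schwarz_ineq)
  then have "rs^2 * V^2 \<le> rs^2 * q 0" using h0 gr[of 0] r0' by (simp add: power_mult_distrib)
  then have q0: "V^2 \<le> q 0" using rs by simp
  define K where "K = V^2 / 4"
  have Kpos: "K > 0" using Vpos by (simp add: K_def)
  have "E 0 \<ge> K"
  proof -
    have "E 0 = q 0 / 2 - 1 / rs" by (simp add: E_def r0' inverse_eq_divide)
    moreover have "4 / rs \<le> V^2" using V3 by (simp add: V_def)
    moreover have "1 / rs = (4 / rs) / 4" by simp
    ultimately show ?thesis using q0 unfolding K_def by linarith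
  qed
  then have EK: "\<And>t. t \<le> 0 \<Longrightarrow> E t \<ge> K" using Emono order_trans by blast
  have qK: "\<And>t. t \<le> 0 \<Longrightarrow> q t - 1 / r t \<ge> 2 * K + 1 / r t"
  proof -
    fix t :: real assume t: "t \<le> 0"
    have "q t / 2 - inverse (r t) \<ge> K" using EK[OF t] by (simp add: E_def)
    moreover have "inverse (r t) = 1 / r t" by (simp add: divide_inverse)
    ultimately show "q t - 1 / r t \<ge> 2 * K + 1 / r t" by linarith
  qed
  define hp where "hp t = q t - Dx t * h t - 1 / r t" for t
  have hd': "\<And>t. t \<le> 0 \<Longrightarrow> (h has_real_derivative hp t) (at t within {..0})" using hd by (simp add: hp_def)
  have hz: "\<And>t. t < 0 \<Longrightarrow> h t = 0 \<Longrightarrow> hp t > 0"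
  proof -
    fix t :: real assume t: "t < 0" "h t = 0"
    have "1 / r t > 0" using rpos[of t] t by simp
    moreover have "hp t = q t - 1 / r t" by (simp add: hp_def t)
    ultimately show "hp t > 0" using qK[of t] t Kpos by linarith
  qed
  have hcont: "\<And>p q. q \<le> 0 \<Longrightarrow> continuous_on {p..q} h"
    by (rule cont_within[of _ _ _ hp]) (use hd' in auto)
  have hbound: "\<And>p t. -1 \<le> p \<Longrightarrow> p \<le> t \<Longrightarrow> t \<le> 0 \<Longrightarrow> (\<forall>s\<in>{p..0}. h s \<ge> 0) \<Longrightarrow> h t \<le> rs * V * exp B"
  proof -
    fix p t :: real assume pt: "-1 \<le> p" "p \<le> t" "t \<le> 0" and hnn: "\<forall>s\<in>{p..0}. h s \<ge> 0"
    have "(\<lambda>s. h s * exp (B * s)) t \<le> (\<lambda>s. h s * exp (B * s)) 0"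
    proof (rule mono_within[OF pt(3) order_refl, of _ "\<lambda>s. hp s * exp (B * s) + exp (B * s) * (B * 1) * h s"])
      fix s :: real assume s: "s \<in> {t..0}"
      show "((\<lambda>s. h s * exp (B * s)) has_real_derivative hp s * exp (B * s) + exp (B * s) * (B * 1) * h s) (at s within {..0})"
        by (rule DERIV_mult[OF hd'[of s] DERIV_chain2[OF DERIV_exp DERIV_cmult[OF DERIV_ident]]]) (use s in auto)
    next
      fix s :: real assume s: "t < s" "s < 0"
      have hs: "h s \<ge> 0" using hnn s pt by auto
      have "hp s + B * h s = (q s - 1 / r s) + (B - Dx s) * h s" by (simp add: hp_def algebra_simps)
      moreover have "(B - Dx s) * h s \<ge> 0" using D1[of s] s hs by simp
      moreover have "q s - 1 / r s \<ge> 0" using qK[of s] s Kpos rpos[of s] by (smt (verit) divide_pos_pos)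
      ultimately have "hp s + B * h s \<ge> 0" by linarith
      then have "exp (B * s) * (hp s + B * h s) \<ge> 0" by simp
      then show "0 \<le> hp s * exp (B * s) + exp (B * s) * (B * 1) * h s" by (simp add: algebra_simps)
    qed
    then have "h t * exp (B * t) \<le> rs * V" using h0 by simp
    then have "h t \<le> rs * V * exp (- (B * t))" by (simp add: exp_minus field_simps)
    also have "exp (- (B * t)) \<le> exp B"
    proof -
      have "B * (- t) \<le> B * 1" using mult_left_mono[of "-t" 1 B] pt B by simp
      then show ?thesis by simp
    qed
    finally show "h t \<le> rs * V * exp B" using rs Vpos by (simp add: mult_left_mono)
  qed
  define a0 where "a0 = - 8 * rs / V"
  have "8 * rs / V \<le> 1" using V1 Vpos by (simp add: V_def divide_le_eq_1_pos)
  then have a0: "-1 \<le> a0" "a0 < 0" using rs Vpos by (simp_all add: a0_def)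
  have h0pos: "h 0 > 0" using h0 rs Vpos by simp
  have "\<exists>t1. a0 \<le> t1 \<and> t1 \<le> 0 \<and> h t1 < 0"
  proof (rule ccontr)
    assume nex: "\<not> (\<exists>t1. a0 \<le> t1 \<and> t1 \<le> 0 \<and> h t1 < 0)"
    have hnn: "\<forall>s\<in>{a0..0}. h s \<ge> 0"
    proof
      fix s assume s: "s \<in> {a0..0}"
      show "h s \<ge> 0"
      proof (rule ccontr)
        assume "\<not> h s \<ge> 0"
        then have "h s < 0" by simp
        with s nex show False by auto
      qed
    qed
    have BK: "B * (rs * V * exp B) \<le> K"
    proof -
      have "4 * B * rs * exp B \<le> V" using V2 by (simp add: V_def)
      from mult_right_mono[OF this, of V] Vpos have "4 * B * rs * exp B * V \<le> V * V" by simp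
      then show ?thesis by (simp add: K_def power2_eq_square algebra_simps)
    qed
    have hpK: "\<And>s. a0 < s \<Longrightarrow> s < 0 \<Longrightarrow> hp s - K * 1 \<ge> 0"
    proof -
      fix s :: real assume s: "a0 < s" "s < 0"
      have hs: "0 \<le> h s" "h s \<le> rs * V * exp B" using hnn s hbound[of a0 s] a0 by auto
      have "Dx s * h s \<le> B * (rs * V * exp B)"
        using mult_mono[OF D1[of s] hs(2) B hs(1)] s by simp
      moreover have "1 / r s > 0" using rpos[of s] s by simp
      moreover have "q s - 1 / r s \<ge> 2 * K + 1 / r s" using qK[of s] s by simp
      moreover have "hp s = q s - Dx s * h s - 1 / r s" by (simp add: hp_def)
      ultimately show "hp s - K * 1 \<ge> 0" using BK by linarith
    qed
    have "(\<lambda>s. h s - K * s) a0 \<le> (\<lambda>s. h s - K * s) 0"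
      by (rule mono_within[OF less_imp_le[OF a0(2)] order_refl, of _ "\<lambda>s. hp s - K * 1"])
        (use hpK hd' in \<open>auto intro!: DERIV_diff DERIV_cmult\<close>)
    then have "h a0 \<le> rs * V + K * a0" using h0 by simp
    moreover have "K * a0 = - 2 * rs * V" using Vpos by (simp add: K_def a0_def power2_eq_square)
    moreover have "rs * V > 0" using rs Vpos by simp
    ultimately have "h a0 < 0" by linarith
    moreover have "a0 \<in> {a0..0}" using a0 by simp
    ultimately show False using hnn by fastforce
  qed
  then obtain t1 where t1: "a0 \<le> t1" "t1 \<le> 0" "h t1 < 0" by blast
  have c1: "continuous_on {t1..0} h" by (rule hcont) simp
  have "\<exists>T. t1 \<le> T \<and> T \<le> 0 \<and> h T = 0"
    by (rule IVT'[OF _ _ t1(2) c1]) (use t1(3) h0pos in auto)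
  then obtain T where T: "t1 \<le> T" "T \<le> 0" "h T = 0" by blast
  have Tneg: "T < 0" using T h0pos by (cases "T = 0") auto
  have hpos: "\<And>t. T < t \<Longrightarrow> t < 0 \<Longrightarrow> h t > 0"
  proof -
    fix t :: real assume tt: "T < t" "t < 0"
    have "h T \<ge> 0" using T(3) by simp
    from sign_lemma[OF hd' hz tt this] show "h t > 0" .
  qed
  have hneg: "\<And>t. t < T \<Longrightarrow> h t < 0"
  proof -
    fix t assume t: "t < T"
    show "h t < 0"
    proof (rule ccontr)
      assume "\<not> h t < 0"
      then have "h t \<ge> 0" by simp
      from sign_lemma[OF hd' hz t Tneg this] have "h T > 0" .
      then show False using T(3) by simp
    qed
  qed
  have rdT: "rd T = 0" using rdh[of T] T by simp
  have rdpos: "\<forall>t. T < t \<and> t < 0 \<longrightarrow> rd t > 0"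
    using hpos rdh rpos by (auto intro!: divide_pos_pos)
  have rdneg: "\<forall>t. t < T \<longrightarrow> rd t < 0"
  proof (intro allI impI)
    fix t assume t: "t < T"
    have "t \<le> 0" using t Tneg by simp
    then show "rd t < 0" using hneg[OF t] rdh[of t] rpos[of t] by (simp add: divide_neg_pos)
  qed
  have Ta0: "a0 \<le> T" using t1 T by simp
  have hnnT: "\<forall>s\<in>{T..0}. h s \<ge> 0"
  proof
    fix s assume s: "s \<in> {T..0}"
    show "h s \<ge> 0"
    proof (cases "s = T \<or> s = 0")
      case True then show ?thesis using T h0pos by auto
    next
      case False then show ?thesis using hpos[of s] s by auto
    qed
  qed
  define M where "M = rs * V * exp B"
  have Mnn: "M \<ge> 0" using rs Vpos by (simp add: M_def)
  have gd': "\<And>t. t \<in> {T..0} \<Longrightarrow> (g has_real_derivative 2 * h t) (at t within {..0})" using gd by simp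
  have "(\<lambda>s. 2 * M * s - g s) T \<le> (\<lambda>s. 2 * M * s - g s) 0"
  proof (rule mono_within[OF T(2) order_refl, of _ "\<lambda>s. 2 * M * 1 - 2 * h s"])
    fix s assume s: "s \<in> {T..0}"
    show "((\<lambda>s. 2 * M * s - g s) has_real_derivative 2 * M * 1 - 2 * h s) (at s within {..0})"
      by (rule DERIV_diff[OF DERIV_cmult[OF DERIV_ident] gd]) (use s in simp)
  next
    fix s assume s: "T < s" "s < 0"
    have "h s \<le> M" unfolding M_def by (rule hbound[of T s]) (use a0 Ta0 s hnnT in auto)
    then show "0 \<le> 2 * M * 1 - 2 * h s" by simp
  qed
  then have "g T \<ge> g 0 + 2 * M * T" by simp
  moreover have "g 0 = rs^2" using gr[of 0] r0' by simp
  moreover have "M * T \<ge> M * a0" using mult_left_mono[OF Ta0 Mnn] .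
  moreover have "M * a0 = - 8 * rs^2 * exp B" using Vpos by (simp add: M_def a0_def power2_eq_square)
  ultimately have gT: "g T \<ge> rs^2 - 16 * rs^2 * exp B" by linarith
  have gTlt: "g T < rs^2"
  proof -
    have "g T < g 0"
      by (rule smono_within[OF Tneg order_refl, of _ "\<lambda>s. 2 * h s"]) (use gd hpos in auto)
    then show ?thesis using gr[of 0] r0' by simp
  qed
  have hlin: "\<And>t. t \<le> T \<Longrightarrow> h t \<le> - 2 * K * (T - t)"
  proof -
    fix t :: real assume t: "t \<le> T"
    have "(\<lambda>s. h s - 2 * K * s) t \<le> (\<lambda>s. h s - 2 * K * s) T"
    proof (rule mono_within[OF t T(2), of _ "\<lambda>s. hp s - 2 * K * 1"])
      fix s assume s: "s \<in> {t..T}"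
      show "((\<lambda>s. h s - 2 * K * s) has_real_derivative hp s - 2 * K * 1) (at s within {..0})"
        by (rule DERIV_diff[OF hd' DERIV_cmult[OF DERIV_ident]]) (use s T in simp)
    next
      fix s assume s: "t < s" "s < T"
      have "Dx s * h s \<le> 0" using D0[of s] hneg[of s] s Tneg by (simp add: mult_nonneg_nonpos)
      moreover have "1 / r s > 0" using rpos[of s] s Tneg by simp
      moreover have "q s - 1 / r s \<ge> 2 * K + 1 / r s" using qK[of s] s Tneg by simp
      moreover have "hp s = q s - Dx s * h s - 1 / r s" by (simp add: hp_def)
      ultimately show "0 \<le> hp s - 2 * K * 1" by linarith
    qed
    then show "h t \<le> - 2 * K * (T - t)" using T(3) by (simp add: algebra_simps)
  qed
  have grow: "\<And>t. t \<le> T \<Longrightarrow> g t \<ge> g T + 2 * K * ((T - t) * (T - t))"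
  proof -
    fix t :: real assume t: "t \<le> T"
    have "(\<lambda>s. g s - 2 * K * ((T - s) * (T - s))) T \<le> (\<lambda>s. g s - 2 * K * ((T - s) * (T - s))) t"
    proof (rule antimono_within[OF t T(2), of _ "\<lambda>s. 2 * h s - 2 * K * ((0 - 1) * (T - s) + (0 - 1) * (T - s))"])
      fix s assume s: "s \<in> {t..T}"
      show "((\<lambda>s. g s - 2 * K * ((T - s) * (T - s))) has_real_derivative 2 * h s - 2 * K * ((0 - 1) * (T - s) + (0 - 1) * (T - s))) (at s within {..0})"
        by (rule DERIV_diff[OF gd DERIV_cmult[OF DERIV_mult[OF DERIV_diff[OF DERIV_const DERIV_ident] DERIV_diff[OF DERIV_const DERIV_ident]]]]) (use s T in simp)
    next
      fix s assume s: "t < s" "s < T"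
      have "h s \<le> - 2 * K * (T - s)" using hlin[of s] s by simp
      then show "2 * h s - 2 * K * ((0 - 1) * (T - s) + (0 - 1) * (T - s)) \<le> 0" by (simp add: algebra_simps)
    qed
    then show "g t \<ge> g T + 2 * K * ((T - t) * (T - t))" by simp
  qed
  define s0 where "s0 = 6 * rs * exp B / V"
  define t2 where "t2 = T - s0"
  have s0pos: "s0 > 0" using rs Vpos by (simp add: s0_def)
  have sV: "V * s0 = 6 * rs * exp B" using Vpos by (simp add: s0_def)
  have "2 * K * (s0 * s0) = (V * s0) * (V * s0) / 2" by (simp add: K_def power2_eq_square algebra_simps)
  also have "\<dots> = 18 * (rs^2 * (exp B * exp B))" by (simp only: sV) (simp add: power2_eq_square algebra_simps)
  finally have e1: "2 * K * (s0 * s0) = 18 * (rs^2 * (exp B * exp B))" .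
  have "exp B * exp B \<ge> exp B" using B by simp
  from mult_left_mono[OF this, of "rs^2"] have e2: "rs^2 * (exp B * exp B) \<ge> rs^2 * exp B" by simp
  have e3: "rs^2 * exp B > 0" using rs by simp
  have t2T: "t2 < T" using s0pos by (simp add: t2_def)
  have "T - t2 = s0" by (simp add: t2_def)
  then have "g t2 \<ge> g T + 2 * K * (s0 * s0)" using grow[of t2] t2T by simp
  then have gt2: "g t2 > rs^2" using gT e1 e2 e3 by linarith
  have c2: "continuous_on {t2..T} g" by (rule cont_within[of T _ _ "\<lambda>s. 2 * h s"]) (use gd T in auto)
  have "\<exists>tau. t2 \<le> tau \<and> tau \<le> T \<and> g tau = rs^2"
    by (rule IVT2'[OF _ _ _ c2]) (use gTlt gt2 t2T in auto)
  then obtain tau where tau: "t2 \<le> tau" "tau \<le> T" "g tau = rs^2" by blast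
  have tauT: "tau < T" using tau gTlt by (cases "tau = T") auto
  have rtau: "r tau = rs"
    using power2_eq_imp_eq[of "r tau" rs] tau(3) gr[of tau] rs by (simp add: r_def)
  have taub: "t2 \<ge> - (8 * rs + 6 * rs * exp B) / V"
  proof -
    have "- (8 * rs + 6 * rs * exp B) / V = a0 - s0" by (simp add: a0_def s0_def diff_divide_distrib)
    then show ?thesis using Ta0 by (simp add: t2_def)
  qed
  have tau0: "tau < 0" using tauT Tneg by simp
  have gle: "\<And>s. s \<in> {tau..0} \<Longrightarrow> g s \<le> rs^2"
  proof -
    fix s assume s: "s \<in> {tau..0}"
    show "g s \<le> rs^2"
    proof (cases "s \<le> T")
      case True
      have "g s \<le> g tau"
        by (rule antimono_within[of tau s, of _ "\<lambda>s. 2 * h s"]) (use s True Tneg gd hneg in \<open>auto intro: less_imp_le\<close>)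
      then show ?thesis using tau(3) by simp
    next
      case False
      have "g s \<le> g 0"
        by (rule mono_within[of s 0, of _ "\<lambda>s. 2 * h s"]) (use s False gd hpos in \<open>auto intro: less_imp_le\<close>)
      then show ?thesis using gr[of 0] r0' by simp
    qed
  qed
  define W where "W s = q s - 2 * inverse (r s) - (g s * q s - h s * h s) / rs^2" for s
  define Wp where "Wp s = 2 * (- Dx s * q s - h s / r s ^ 3) - 2 * - (h s / r s ^ 3)
      - ((2 * h s * q s + 2 * (- Dx s * q s - h s / r s ^ 3) * g s) - (hp s * h s + hp s * h s)) / rs^2" for s
  have Wd: "\<And>s. s \<le> 0 \<Longrightarrow> (W has_real_derivative Wp s) (at s within {..0})"
  proof -
    fix s :: real assume s: "s \<le> 0"
    show "(W has_real_derivative Wp s) (at s within {..0})"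
      unfolding W_def Wp_def
      by (rule DERIV_diff[OF DERIV_diff[OF qd[OF s] DERIV_cmult[OF rid[OF s]]]
            DERIV_cdivide[OF DERIV_diff[OF DERIV_mult[OF gd[OF s] qd[OF s]] DERIV_mult[OF hd'[OF s] hd'[OF s]]]]])
  qed
  have Wp_eq: "\<And>s. s \<le> 0 \<Longrightarrow> Wp s = - 2 * Dx s * (q s - (g s * q s - h s * h s) / rs^2)"
  proof -
    fix s :: real assume s: "s \<le> 0"
    have rp: "r s > 0" using rpos[OF s] .
    show "Wp s = - 2 * Dx s * (q s - (g s * q s - h s * h s) / rs^2)"
      unfolding Wp_def hp_def gr using rp rs by (simp add: field_simps power2_eq_square power3_eq_cube)
  qed
  have Wp_nonpos: "\<And>s. s \<in> {tau..0} \<Longrightarrow> Wp s \<le> 0"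
  proof -
    fix s assume s: "s \<in> {tau..0}"
    have s0': "s \<le> 0" using s by simp
    have "g s * q s \<le> rs^2 * q s" using gle[OF s] qnn[of s] by (simp add: mult_right_mono)
    moreover have "h s * h s \<ge> 0" by simp
    ultimately have "g s * q s - h s * h s \<le> rs^2 * q s" by linarith
    then have "(g s * q s - h s * h s) / rs^2 \<le> q s" using rs by (simp add: pos_divide_le_eq mult.commute)
    then have "q s - (g s * q s - h s * h s) / rs^2 \<ge> 0" by simp
    moreover have "Dx s \<ge> 0" using D0[OF s0'] .
    ultimately show "Wp s \<le> 0" using Wp_eq[OF s0'] by (simp add: mult_nonneg_nonneg)
  qed
  have "W 0 \<le> W tau"
    by (rule antimono_within[of tau 0, of _ Wp]) (use tau0 Wd Wp_nonpos in auto)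
  moreover have "\<And>s. r s = rs \<Longrightarrow> W s = h s * h s / rs^2 - 2 / rs"
  proof -
    fix s assume rs_s: "r s = rs"
    have "g s = rs^2" using gr[of s] rs_s by simp
    then show "W s = h s * h s / rs^2 - 2 / rs" unfolding W_def using rs rs_s
      by (simp add: diff_divide_distrib inverse_eq_divide)
  qed
  ultimately have "h 0 * h 0 / rs^2 - 2 / rs \<le> h tau * h tau / rs^2 - 2 / rs" using r0' rtau by simp
  then have "h 0 * h 0 / rs^2 \<le> h tau * h tau / rs^2" by simp
  moreover have "rs^2 > 0" using rs by simp
  ultimately have "h 0 * h 0 \<le> h tau * h tau" by (simp add: divide_le_cancel)
  then have "(rs * V)^2 \<le> (- h tau)^2" using h0 by (simp add: power2_eq_square)
  moreover have "- h tau \<ge> 0" using hneg[OF tauT] by simp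
  ultimately have "rs * V \<le> - h tau" by (rule power2_le_imp_le)
  moreover have "rd tau = h tau / rs" using rdh[of tau] tau0 rtau by simp
  ultimately have "rd tau \<le> - V" using rs by (simp add: pos_divide_le_eq algebra_simps)
  moreover have "norm (x tau) = rs" using rtau by (simp add: r_def)
  moreover have "- 8 * rs / rd 0 \<le> T" using Ta0 by (simp add: a0_def V_def)
  moreover have "- (8 * rs + 6 * rs * exp B) / rd 0 \<le> tau" using taub tau(1) by (simp add: V_def)
  ultimately show ?thesis using Tneg rdT rdpos rdneg tauT by (auto simp: V_def)
qed

theorem lemma7p2:
  fixes D :: "real^2 \<Rightarrow> real"
    and x v :: "nat \<Rightarrow> real \<Rightarrow> real^2"
    and rd :: "nat \<Rightarrow> real \<Rightarrow> real"
    and rstar :: real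
  assumes D_nonneg: "\<And>y. y \<noteq> 0 \<Longrightarrow> D y \<ge> 0"
    and D_bounded: "\<exists>B. \<forall>y. y \<noteq> 0 \<longrightarrow> D y \<le> B"
    and D_C1: "C1_punctured D"
    and sol: "\<And>n. past_solution D (x n) (v n)"
    and nonrect: "\<And>n. nonrectilinear (x n) (v n)"
    and rd_def: "\<And>n t. t \<le> 0 \<Longrightarrow>
        ((\<lambda>s. norm (x n s)) has_real_derivative rd n t) (at t within {..0})"
    and rstar_pos: "rstar > 0"
    and r0: "\<And>n. norm (x n 0) = rstar"
    and rd0: "filterlim (\<lambda>n. rd n 0) at_top sequentially"
  shows "\<exists>T tau :: nat \<Rightarrow> real.
     (\<forall>\<^sub>F n in sequentially.
        T n < 0 \<and> rd n (T n) = 0 \<and>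
        (\<forall>t. T n < t \<and> t < 0 \<longrightarrow> rd n t > 0) \<and>
        (\<forall>t. t < T n \<longrightarrow> rd n t < 0) \<and>
        tau n < T n \<and> norm (x n (tau n)) = rstar) \<and>
     T \<longlonglongrightarrow> 0 \<and> tau \<longlonglongrightarrow> 0 \<and>
     filterlim (\<lambda>n. rd n (tau n)) at_bot sequentially"
proof -
  obtain B0 where B0: "\<forall>y. y \<noteq> 0 \<longrightarrow> D y \<le> B0" using D_bounded by blast
  define B where "B = max B0 0"
  have B: "B \<ge> 0" by (simp add: B_def)
  have DB: "\<And>y. y \<noteq> 0 \<Longrightarrow> D y \<le> B" using B0 by (force simp: B_def)
  define P where "P n T tau \<longleftrightarrow> T < 0 \<and> rd n T = 0 \<and> (\<forall>t. T < t \<and> t < 0 \<longrightarrow> rd n t > 0) \<and> (\<forall>t. t < T \<longrightarrow> rd n t < 0)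
     \<and> tau < T \<and> norm (x n tau) = rstar \<and> - 8*rstar / rd n 0 \<le> T \<and> - (8*rstar + 6*rstar*exp B) / rd n 0 \<le> tau
     \<and> rd n tau \<le> - rd n 0" for n T tau
  define Z where "Z = max (max (8 * rstar) (4 * B * rstar * exp B)) (max 1 (4 / rstar))"
  have evZ: "\<forall>\<^sub>F n in sequentially. Z \<le> rd n 0" using rd0 by (simp add: filterlim_at_top)
  have condP: "\<And>n. Z \<le> rd n 0 \<Longrightarrow> \<exists>T tau. P n T tau"
  proof -
    fix n assume Zn: "Z \<le> rd n 0"
    have V1: "rd n 0 \<ge> 8 * rstar" and V2: "rd n 0 \<ge> 4 * B * rstar * exp B"
      and V4: "rd n 0 \<ge> 1" and V5: "rd n 0 \<ge> 4 / rstar" using Zn by (auto simp: Z_def)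
    have "rd n 0 \<le> rd n 0 * rd n 0" using V4 by simp
    then have V3: "(rd n 0)^2 \<ge> 4 / rstar" using V5 by (simp add: power2_eq_square)
    show "\<exists>T tau. P n T tau" unfolding P_def
      by (rule per_solution[OF D_nonneg DB B sol rd_def rstar_pos r0 V1 V2 V3])
  qed
  define T where "T n = (SOME T. \<exists>tau. P n T tau)" for n
  define tau where "tau n = (SOME tau. P n (T n) tau)" for n
  have PT: "\<And>n. Z \<le> rd n 0 \<Longrightarrow> P n (T n) (tau n)"
  proof -
    fix n assume "Z \<le> rd n 0"
    then have "\<exists>T tau. P n T tau" by (rule condP)
    then have "\<exists>tau. P n (T n) tau" unfolding T_def by (rule someI_ex)
    then show "P n (T n) (tau n)" unfolding tau_def by (rule someI_ex)
  qed
  have evP: "\<forall>\<^sub>F n in sequentially. P n (T n) (tau n)" using evZ by (rule eventually_mono) (rule PT)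
  have inf: "filterlim (\<lambda>n. rd n 0) at_infinity sequentially" by (rule filterlim_at_top_imp_at_infinity[OF rd0])
  have l1: "(\<lambda>n. - 8 * rstar / rd n 0) \<longlonglongrightarrow> 0" by (rule tendsto_divide_0[OF tendsto_const inf])
  have l2: "(\<lambda>n. - (8 * rstar + 6 * rstar * exp B) / rd n 0) \<longlonglongrightarrow> 0" by (rule tendsto_divide_0[OF tendsto_const inf])
  have "T \<longlonglongrightarrow> 0"
  proof (rule tendsto_sandwich[OF _ _ l1 tendsto_const[of 0]])
    show "\<forall>\<^sub>F n in sequentially. - 8 * rstar / rd n 0 \<le> T n" using evP by (rule eventually_mono) (simp add: P_def)
    show "\<forall>\<^sub>F n in sequentially. T n \<le> 0" using evP by (rule eventually_mono) (simp add: P_def)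
  qed
  moreover have "tau \<longlonglongrightarrow> 0"
  proof (rule tendsto_sandwich[OF _ _ l2 tendsto_const[of 0]])
    show "\<forall>\<^sub>F n in sequentially. - (8 * rstar + 6 * rstar * exp B) / rd n 0 \<le> tau n" using evP by (rule eventually_mono) (simp add: P_def)
    show "\<forall>\<^sub>F n in sequentially. tau n \<le> 0" using evP by (rule eventually_mono) (auto simp: P_def)
  qed
  moreover have "filterlim (\<lambda>n. rd n (tau n)) at_bot sequentially"
  proof -
    have "filterlim (\<lambda>n. - rd n (tau n)) at_top sequentially"
      by (rule filterlim_at_top_mono[OF rd0]) (use evP in \<open>auto elim: eventually_mono simp: P_def\<close>)
    then show ?thesis by (simp add: filterlim_uminus_at_bot)
  qed
  moreover have "\<forall>\<^sub>F n in sequentially.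
        T n < 0 \<and> rd n (T n) = 0 \<and>
        (\<forall>t. T n < t \<and> t < 0 \<longrightarrow> rd n t > 0) \<and>
        (\<forall>t. t < T n \<longrightarrow> rd n t < 0) \<and>
        tau n < T n \<and> norm (x n (tau n)) = rstar"
    using evP by (rule eventually_mono) (simp add: P_def)
  ultimately show ?thesis by blast
qed

end
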